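(* Fix integers $k\ge 1$ and $j\in\{1,\dots,2^k\}$ and a real number $\beta>0$. Let $q_j=1/(2^k-j+1)$ and let $\nu_j$ be the probability distribution on $Z=XY\in\{0,1\}^2$ given by $\nu_j(X=0,Y=0)=1-3q_j/4$ and $\nu_j(X=x,Y=y)=q_j/4$ whenever $x\neq 0$ or $y\neq 0$. Let $\mathcal{M}_j$ be the set of probability distributions $\mu$ of $(C,Z)$, with $C=AB\in\{0,1\}^2$ and $Z=XY\in\{0,1\}^2$, of the form $\mu(C=c,Z=z)=\nu_j(Z=z)\,\mu(C=c\mid Z=z)$ where the conditional distribution $\mu(C\mid Z)$ belongs to $\mathcal{T}$. If $F_j:\{0,1\}^2\times\{0,1\}^2\to[0,\infty)$ is a PEF with power $\beta$ for $\mathcal{M}_j$, then the function $(c,z)\mapsto 4\,\nu_j(Z=z)\,F_j(cz)$ is a PEF with power $\beta$ for $\mathcal{M}_{2^k}$ (the model obtained for $j=2^k$, in which the input distribution is uniform).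
   Context: $\mathcal{T}$ denotes the set of conditional distributions $\mu(C\mid Z)$ of outcomes $C=AB\in\{0,1\}^2$ given settings $Z=XY\in\{0,1\}^2$ that (i) satisfy the non-signaling conditions: $\sum_b\mu(ab\mid xy)$ does not depend on $y$ and $\sum_a\mu(ab\mid xy)$ does not depend on $x$; and (ii) satisfy Tsirelson's bounds: with correlators $E_{xy}=\sum_{a,b}(-1)^{a+b}\mu(ab\mid xy)$, one has $|E_{00}+E_{01}+E_{10}+E_{11}-2E_{x'y'}|\le 2\sqrt2$ for every $x'y'\in\{0,1\}^2$. For a set $\mathcal{M}$ of distributions of $(C,Z)$ and $\beta>0$, a probability estimation factor (PEF) with power $\beta$ for $\mathcal{M}$ is a non-negative function $F$ of $(c,z)$ such that $\sum_{c,z}\mu(C=c,Z=z)\,F(cz)\,\mu(C=c\mid Z=z)^{\beta}\le 1$ for every $\mu\in\mathcal{M}$. *)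

theory Defs
  imports Complex_Main
begin

text \<open>Bits are encoded as bool (False = 0, True = 1).
  Outcomes c = (a,b), settings z = (x,y).
  A conditional distribution P c z stands for P(C=c | Z=z);
  a joint distribution mu c z stands for mu(C=c, Z=z).\<close>

type_synonym bit2 = "bool \<times> bool"

definition sgnb :: "bool \<Rightarrow> real" where
  "sgnb a = (if a then -1 else 1)"

definition correlator :: "(bit2 \<Rightarrow> bit2 \<Rightarrow> real) \<Rightarrow> bool \<Rightarrow> bool \<Rightarrow> real" where
  "correlator P x y = (\<Sum>a\<in>UNIV. \<Sum>b\<in>UNIV. sgnb a * sgnb b * P (a,b) (x,y))"

definition T_set :: "(bit2 \<Rightarrow> bit2 \<Rightarrow> real) set" where
  "T_set = {P.
     (\<forall>c z. 0 \<le> P c z) \<and>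
     (\<forall>z. (\<Sum>c\<in>UNIV. P c z) = 1) \<and>
     (\<forall>a x y y'. (\<Sum>b\<in>UNIV. P (a,b) (x,y)) = (\<Sum>b\<in>UNIV. P (a,b) (x,y'))) \<and>
     (\<forall>b x x' y. (\<Sum>a\<in>UNIV. P (a,b) (x,y)) = (\<Sum>a\<in>UNIV. P (a,b) (x',y))) \<and>
     (\<forall>x' y'. \<bar>correlator P False False + correlator P False True
                + correlator P True False + correlator P True True
                - 2 * correlator P x' y'\<bar> \<le> 2 * sqrt 2)}"

definition condp :: "(bit2 \<Rightarrow> bit2 \<Rightarrow> real) \<Rightarrow> bit2 \<Rightarrow> bit2 \<Rightarrow> real" where
  "condp mu c z = mu c z / (\<Sum>c'\<in>UNIV. mu c' z)"

definition is_PEF :: "real \<Rightarrow> (bit2 \<Rightarrow> bit2 \<Rightarrow> real) set \<Rightarrow> (bit2 \<Rightarrow> bit2 \<Rightarrow> real) \<Rightarrow> bool" where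
  "is_PEF \<beta> M F \<longleftrightarrow> (\<forall>c z. 0 \<le> F c z) \<and>
     (\<forall>mu\<in>M. (\<Sum>c\<in>UNIV. \<Sum>z\<in>UNIV. mu c z * F c z * condp mu c z powr \<beta>) \<le> 1)"

definition qj :: "nat \<Rightarrow> nat \<Rightarrow> real" where
  "qj k j = 1 / (2 ^ k - real j + 1)"

definition nu :: "nat \<Rightarrow> nat \<Rightarrow> bit2 \<Rightarrow> real" where
  "nu k j z = (if z = (False, False) then 1 - 3 * qj k j / 4 else qj k j / 4)"

definition model :: "nat \<Rightarrow> nat \<Rightarrow> (bit2 \<Rightarrow> bit2 \<Rightarrow> real) set" where
  "model k j = {mu. \<exists>P\<in>T_set. \<forall>c z. mu c z = nu k j z * P c z}"

end

theory Submission
  imports Defs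
begin

lemma qj_pos:
  assumes "j \<le> 2 ^ k"
  shows "0 < qj k j \<and> qj k j \<le> 1"
proof -
  have "real j \<le> 2 ^ k" using assms
    by (metis of_nat_le_iff of_nat_numeral of_nat_power)
  then have "1 \<le> 2 ^ k - real j + 1" by simp
  then have "0 < 2 ^ k - real j + 1" by linarith
  with \<open>1 \<le> 2 ^ k - real j + 1\<close> show ?thesis unfolding qj_def by (simp add: divide_le_eq_1)
qed

lemma nu_pos:
  assumes "j \<le> 2 ^ k"
  shows "0 < nu k j z"
  using qj_pos[OF assms, of ] unfolding nu_def by auto

lemma condp_eq:
  assumes "(\<forall>z. (\<Sum>c\<in>UNIV. P c z) = 1)" and "\<And>z. 0 < n z"
    and "\<And>c z. mu c z = n z * P c z"
  shows "condp mu c z = P c z"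
proof -
  have "(\<Sum>c'\<in>UNIV. mu c' z) = n z"
    using assms(1,3) by (simp add: sum_distrib_left[symmetric] del: split_paired_All)
  then show ?thesis unfolding condp_def using assms(2)[of z] assms(3) by simp
qed

lemma nu_top: "nu k (2 ^ k) z = 1/4"
  unfolding nu_def qj_def by simp

theorem proposition1:
  fixes k j :: nat and \<beta> :: real and F :: "bit2 \<Rightarrow> bit2 \<Rightarrow> real"
  assumes "k \<ge> 1" and "1 \<le> j" and "j \<le> 2 ^ k" and "\<beta> > 0"
    and "is_PEF \<beta> (model k j) F"
  shows "is_PEF \<beta> (model k (2 ^ k)) (\<lambda>c z. 4 * nu k j z * F c z)"
  unfolding is_PEF_def
proof (intro conjI ballI allI)
  have F0: "\<And>c z. 0 \<le> F c z" and FB: "\<And>mu. mu \<in> model k j \<Longrightarrow>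
     (\<Sum>c\<in>UNIV. \<Sum>z\<in>UNIV. mu c z * F c z * condp mu c z powr \<beta>) \<le> 1"
    using assms(5) unfolding is_PEF_def by auto
  fix c z show "0 \<le> 4 * nu k j z * F c z"
    using F0[of c z] nu_pos[OF assms(3), of z] by simp
next
  have FB: "\<And>mu. mu \<in> model k j \<Longrightarrow>
     (\<Sum>c\<in>UNIV. \<Sum>z\<in>UNIV. mu c z * F c z * condp mu c z powr \<beta>) \<le> 1"
    using assms(5) unfolding is_PEF_def by auto
  fix mu assume "mu \<in> model k (2 ^ k)"
  then obtain P where P: "P \<in> T_set" and mu: "\<And>c z. mu c z = nu k (2^k) z * P c z"
    unfolding model_def by auto
  have Ps: "\<forall>z. (\<Sum>c\<in>UNIV. P c z) = 1" using P unfolding T_set_def by auto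
  define mu' where "mu' = (\<lambda>c z. nu k j z * P c z)"
  have m': "mu' \<in> model k j" unfolding model_def mu'_def using P by auto
  have c1: "condp mu c z = P c z" for c z
    by (rule condp_eq[OF Ps _ mu]) (simp add: nu_top)
  have c2: "condp mu' c z = P c z" for c z
    by (rule condp_eq[OF Ps]) (auto simp: mu'_def nu_pos[OF assms(3)])
  have "(\<Sum>c\<in>UNIV. \<Sum>z\<in>UNIV. mu c z * (4 * nu k j z * F c z) * condp mu c z powr \<beta>)
      = (\<Sum>c\<in>UNIV. \<Sum>z\<in>UNIV. mu' c z * F c z * condp mu' c z powr \<beta>)"
    apply (intro sum.cong refl)
    apply (simp only: c1 c2 mu nu_top)
    apply (simp add: mu'_def)
    done
  also have "\<dots> \<le> 1" using FB[OF m'] .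
  finally show "(\<Sum>c\<in>UNIV. \<Sum>z\<in>UNIV. mu c z * (4 * nu k j z * F c z) * condp mu c z powr \<beta>) \<le> 1" .
qed

end
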